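(* Let $n\ge1$, $m_1,\dots,m_n\ge1$ integers, $\mu\in(0,1)$, and let $X_{i,j}$, $i=1,\dots,n$, $j=1,\dots,m_i$, be i.i.d. $\mathrm{Bernoulli}(\mu)$. Define $\widehat\mu=\frac1n\sum_{i=1}^n\frac1{m_i}\sum_{j=1}^{m_i}X_{i,j}$ and, for $\lambda>0$, $M_\mu(\lambda)=\mathbb{E}\big[e^{n\lambda\,\mathrm{kl}(\widehat\mu\,|\,\mu)}\big]$. Let $m_{\min}=\min_i m_i$. If $\lambda>m_{\min}$, then $\sup_{0<\mu<1}M_\mu(\lambda)=+\infty$. In particular, there is no finite upper bound on $M_\mu(\lambda)$ that depends only on $n$ and $m_1,\dots,m_n$ and not on $\mu$.
   Context: $\mathrm{kl}(q|p)=q\log\frac qp+(1-q)\log\frac{1-q}{1-p}$ for $q\in[0,1]$, $p\in(0,1)$, with the convention $0\log 0=0$ (the KL divergence between Bernoulli distributions of means $q$ and $p$). *)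

theory Defs
  imports "HOL-Probability.Probability"
begin

definition kl :: "real \<Rightarrow> real \<Rightarrow> real" where
  "kl q p = (if q = 0 then 0 else q * ln (q / p))
          + (if q = 1 then 0 else (1 - q) * ln ((1 - q) / (1 - p)))"

text \<open>Index set of the sample: pairs (i,j) with i < n, j < m i (0-based).\<close>
definition idx :: "nat \<Rightarrow> (nat \<Rightarrow> nat) \<Rightarrow> (nat \<times> nat) set" where
  "idx n m = {(i, j). i < n \<and> j < m i}"

definition muhat :: "nat \<Rightarrow> (nat \<Rightarrow> nat) \<Rightarrow> (nat \<times> nat \<Rightarrow> bool) \<Rightarrow> real" where
  "muhat n m X = (1 / real n) * (\<Sum>i<n. (1 / real (m i)) * (\<Sum>j<m i. of_bool (X (i, j))))"

definition sample_pmf :: "nat \<Rightarrow> (nat \<Rightarrow> nat) \<Rightarrow> real \<Rightarrow> (nat \<times> nat \<Rightarrow> bool) pmf" where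
  "sample_pmf n m \<mu> = Pi_pmf (idx n m) False (\<lambda>_. bernoulli_pmf \<mu>)"

definition M :: "nat \<Rightarrow> (nat \<Rightarrow> nat) \<Rightarrow> real \<Rightarrow> real \<Rightarrow> real" where
  "M n m \<mu> lam = measure_pmf.expectation (sample_pmf n m \<mu>)
                  (\<lambda>X. exp (real n * lam * kl (muhat n m X) \<mu>))"

end

theory Submission
  imports Defs "HOL-Real_Asymp.Real_Asymp"
begin

lemma kl_lower:
  fixes q p :: real
  assumes "0 < q" "q \<le> 1" "0 < p" "p < 1"
  shows "kl q p \<ge> q * ln (q / p) - q"
proof (cases "q = 1")
  case True then show ?thesis by (simp add: kl_def)
next
  case False
  then have q1: "q < 1" using assms by simp
  have "ln ((1 - p) / (1 - q)) \<le> (1 - p) / (1 - q) - 1"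
    using q1 assms by (intro ln_le_minus_one) auto
  then have "ln ((1 - q) / (1 - p)) \<ge> 1 - (1 - p) / (1 - q)"
    using q1 assms by (simp add: ln_div)
  then have "(1 - q) * ln ((1 - q) / (1 - p)) \<ge> (1 - q) * (1 - (1 - p) / (1 - q))"
    using q1 by (intro mult_left_mono) auto
  also have "(1 - q) * (1 - (1 - p) / (1 - q)) = p - q" using q1 by (simp add: field_simps)
  finally have "(1 - q) * ln ((1 - q) / (1 - p)) \<ge> p - q" .
  then show ?thesis using assms False by (simp add: kl_def)
qed

theorem lemma1:
  fixes n :: nat and m :: "nat \<Rightarrow> nat" and lam :: real
  assumes "n \<ge> 1"
    and "\<And>i. i < n \<Longrightarrow> m i \<ge> 1"
    and "lam > real (Min (m ` {..<n}))"
  shows "(SUP \<mu>\<in>{0<..<1}. ereal (M n m \<mu> lam)) = \<infinity>"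
proof -
  define k where "k = Min (m ` {..<n})"
  have "k \<in> m ` {..<n}" unfolding k_def using assms(1) by (intro Min_in) (auto simp: lessThan_empty_iff)
  then obtain i0 where i0: "i0 < n" "m i0 = k" by auto
  have k1: "k \<ge> 1" using assms(2) i0 by auto
  have lamk: "lam > real k" using assms(3) k_def by simp
  have lam0: "lam > 0" using lamk k1 by simp
  define X0 where "X0 = (\<lambda>(i::nat, j::nat). i = i0 \<and> j < m i0)"
  define A where "A = idx n m"
  have finA: "finite A"
  proof -
    have "A = Sigma {..<n} (\<lambda>i. {..<m i})" by (auto simp: A_def idx_def)
    then show ?thesis by auto
  qed
  define c where "c = card (A \<inter> - {x. X0 x})"
  have cardP: "card (A \<inter> {x. X0 x}) = k"
  proof -
    have "A \<inter> {x. X0 x} = {i0} \<times> {..<k}" using i0 by (auto simp: A_def idx_def X0_def)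
    then show ?thesis by (simp add: card_cartesian_product)
  qed
  have X0out: "\<And>x. x \<notin> A \<Longrightarrow> X0 x = False"
    using i0 by (auto simp: A_def idx_def X0_def)
  have muhat: "muhat n m X0 = 1 / real n"
  proof -
    have inner: "(\<Sum>j<m i. of_bool (X0 (i, j)) :: real) = (if i = i0 then real (m i) else 0)" for i
      by (cases "i = i0") (simp_all add: X0_def)
    have "(\<Sum>i<n. (1 / real (m i)) * (\<Sum>j<m i. of_bool (X0 (i, j)))) =
          (\<Sum>i<n. (if i = i0 then 1 else 0) :: real)"
      using i0 k1 by (intro sum.cong) (auto simp: inner)
    also have "\<dots> = 1" using i0 by simp
    finally show ?thesis by (simp add: muhat_def)
  qed
  define C where "C = exp (lam * (- ln (real n) - 1))"
  have C0: "C > 0" by (simp add: C_def)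
  have lowerM: "M n m \<mu> lam \<ge> C * (1 - \<mu>) ^ c * \<mu> powr (real k - lam)" if mu: "0 < \<mu>" "\<mu> < 1" for \<mu>
  proof -
    define f where "f = (\<lambda>X. exp (real n * lam * kl (muhat n m X) \<mu>))"
    define P where "P = sample_pmf n m \<mu>"
    have finP: "finite (set_pmf P)"
      unfolding P_def sample_pmf_def A_def[symmetric]
      by (rule finite_subset[OF set_Pi_pmf_subset'[OF finA]]) (auto intro!: finite_PiE_dflt finA)
    have Meq: "M n m \<mu> lam = (\<Sum>a\<in>set_pmf P. f a * pmf P a)"
      unfolding M_def f_def[symmetric] P_def[symmetric]
      by (rule integral_measure_pmf_real[OF finP]) auto
    have pmfX0: "pmf P X0 = \<mu> ^ k * (1 - \<mu>) ^ c"
    proof -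
      have "pmf P X0 = (\<Prod>x\<in>A. pmf (bernoulli_pmf \<mu>) (X0 x))"
        unfolding P_def sample_pmf_def A_def[symmetric]
        by (rule pmf_Pi'[OF finA]) (use X0out in auto)
      also have "\<dots> = (\<Prod>x\<in>A. if X0 x then \<mu> else 1 - \<mu>)"
        using mu by (intro prod.cong) auto
      also have "\<dots> = (\<Prod>x\<in>A \<inter> {x. X0 x}. \<mu>) * (\<Prod>x\<in>A \<inter> - {x. X0 x}. 1 - \<mu>)"
        by (rule prod.If_cases[OF finA])
      also have "\<dots> = \<mu> ^ k * (1 - \<mu>) ^ c" using cardP by (simp add: c_def)
      finally show ?thesis .
    qed
    have inP: "X0 \<in> set_pmf P" using pmfX0 mu by (simp add: set_pmf_iff)
    have "f X0 * pmf P X0 \<le> (\<Sum>a\<in>set_pmf P. f a * pmf P a)"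
      by (rule member_le_sum[OF inP _ finP]) (auto simp: f_def)
    moreover have "f X0 \<ge> C * \<mu> powr (- lam)"
    proof -
      have n0: "real n > 0" using assms(1) by simp
      have kl: "kl (1 / real n) \<mu> \<ge> (1 / real n) * ln ((1 / real n) / \<mu>) - 1 / real n"
        using mu assms(1) by (intro kl_lower) auto
      have "real n * lam * kl (1 / real n) \<mu> \<ge> real n * lam * ((1 / real n) * ln ((1 / real n) / \<mu>) - 1 / real n)"
        using kl n0 lam0 by (intro mult_left_mono) auto
      also have "real n * lam * ((1 / real n) * ln ((1 / real n) / \<mu>) - 1 / real n) =
                 lam * (- ln (real n) - 1) + (- lam) * ln \<mu>"
        using n0 mu by (simp add: ln_div ln_mult field_simps)
      finally have "exp (real n * lam * kl (1 / real n) \<mu>) \<ge> exp (lam * (- ln (real n) - 1) + (- lam) * ln \<mu>)"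
        by simp
      also have "exp (lam * (- ln (real n) - 1) + (- lam) * ln \<mu>) = C * \<mu> powr (- lam)"
        using mu by (simp add: C_def powr_def exp_diff exp_minus exp_add field_simps)
      finally show ?thesis by (simp add: f_def muhat)
    qed
    ultimately have "M n m \<mu> lam \<ge> C * \<mu> powr (- lam) * (\<mu> ^ k * (1 - \<mu>) ^ c)"
      using Meq pmfX0 mu C0
      by (smt (verit, best) mult_right_mono powr_ge_zero zero_le_mult_iff zero_le_power)
    also have "C * \<mu> powr (- lam) * (\<mu> ^ k * (1 - \<mu>) ^ c) = C * (1 - \<mu>) ^ c * \<mu> powr (real k - lam)"
      using mu by (simp add: powr_realpow[symmetric] powr_diff powr_minus_divide field_simps)
    finally show ?thesis by simp
  qed
  define g where "g = (\<lambda>x::real. C * (1/2) ^ c * x powr (real k - lam))"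
  have lim: "filterlim g at_top (at_right 0)"
  proof -
    have "real k - lam < 0" "C * (1/2) ^ c > 0" using lamk C0 by auto
    then show ?thesis unfolding g_def by real_asymp
  qed
  have "(SUP \<mu>\<in>{0<..<1}. ereal (M n m \<mu> lam)) = (\<top>::ereal)"
  proof (subst SUP_eq_top_iff, intro allI impI)
    fix y :: ereal assume "y < \<top>"
    then obtain B where B: "y \<le> ereal B" by (cases y) auto
    have ev: "eventually (\<lambda>x. g x > B \<and> 0 < x \<and> x < 1/2) (at_right 0)"
      using filterlim_at_top_dense[THEN iffD1, OF lim, rule_format, of B]
        eventually_at_right_real[of 0 "1/2"]
      by (auto elim: eventually_mono intro: eventually_conj)
    then obtain x where x: "g x > B" "0 < x" "x < 1/2"
      using eventually_happens[OF ev] by auto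
    have "g x \<le> C * (1 - x) ^ c * x powr (real k - lam)"
      unfolding g_def using x C0
      by (intro mult_right_mono mult_left_mono power_mono) auto
    also have "\<dots> \<le> M n m x lam" using lowerM x by auto
    finally have "B < M n m x lam" using x by simp
    then have "y < ereal (M n m x lam)" using B by (metis ereal_less(2) le_less_trans less_ereal.simps(1))
    then show "\<exists>i\<in>{0<..<1}. y < ereal (M n m i lam)" using x by auto
  qed
  then show ?thesis by (simp only: top_ereal_def)
qed

end
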